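(* Let $a<b$, $n\ge 1$, and let $\{(\tau_k,\omega_k)\}_{k=1}^{2n+1}$ be the nodes and weights of the Gaussian quadrature rule for $S^n_{5,1}$ on the uniform knot sequence $x_k=a+k(b-a)/n$. Then for every $f\in C^6[a,b]$ there is $\xi\in[a,b]$ such that $$\int_a^b f(t)\,dt-\sum_{k=1}^{2n+1}\omega_k f(\tau_k)=c_{2n+1,6}\,f^{(6)}(\xi),\qquad c_{2n+1,6}=\frac{(b-a)^7}{5040}-\frac1{720}\sum_{k=1}^{2n+1}\omega_k(\tau_k-a)^6,$$ and $c_{2n+1,6}>0$.
   Context: $S^n_{5,1}=\{f\in C^1[a,b]:\ f|_{(x_{k-1},x_k)}\text{ is a polynomial of degree}\le 5,\ k=1,\dots,n\}$. A Gaussian quadrature rule for $S^n_{5,1}$ is a rule with $2n+1$ distinct nodes in $[a,b]$ and positive weights that integrates every $f\in S^n_{5,1}$ exactly over $[a,b]$ ($2n+1$ being the minimal possible number of nodes). *)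

theory Defs
  imports "HOL-Analysis.Analysis" "HOL-Computational_Algebra.Polynomial"
begin

definition uknot :: "real \<Rightarrow> real \<Rightarrow> nat \<Rightarrow> nat \<Rightarrow> real" where
  "uknot a b n k = a + real k * (b - a) / real n"

definition C1_on_interval :: "real \<Rightarrow> real \<Rightarrow> (real \<Rightarrow> real) \<Rightarrow> bool" where
  "C1_on_interval a b f \<longleftrightarrow>
     (\<exists>f'. (\<forall>x\<in>{a..b}. (f has_real_derivative f' x) (at x within {a..b}))
          \<and> continuous_on {a..b} f')"

definition spline51 :: "real \<Rightarrow> real \<Rightarrow> nat \<Rightarrow> (real \<Rightarrow> real) set" where
  "spline51 a b n = {f. C1_on_interval a b f \<and>
     (\<forall>k\<in>{1..n}. \<exists>p :: real poly. degree p \<le> 5 \<and>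
        (\<forall>x\<in>{uknot a b n (k - 1)<..<uknot a b n k}. f x = poly p x))}"

definition gaussian_rule51 ::
  "real \<Rightarrow> real \<Rightarrow> nat \<Rightarrow> (nat \<Rightarrow> real) \<Rightarrow> (nat \<Rightarrow> real) \<Rightarrow> bool" where
  "gaussian_rule51 a b n \<tau> \<omega> \<longleftrightarrow>
     inj_on \<tau> {1..2*n+1} \<and>
     (\<forall>k\<in>{1..2*n+1}. \<tau> k \<in> {a..b} \<and> \<omega> k > 0) \<and>
     (\<forall>f\<in>spline51 a b n. integral {a..b} f = (\<Sum>k=1..2*n+1. \<omega> k * f (\<tau> k)))"

definition Cm_derivs :: "nat \<Rightarrow> real \<Rightarrow> real \<Rightarrow> (real \<Rightarrow> real) \<Rightarrow> (nat \<Rightarrow> real \<Rightarrow> real) \<Rightarrow> bool" where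
  "Cm_derivs m a b f D \<longleftrightarrow> D 0 = f \<and>
     (\<forall>j<m. \<forall>x\<in>{a..b}. (D j has_real_derivative D (Suc j) x) (at x within {a..b})) \<and>
     continuous_on {a..b} (D m)"

end

theory Submission
  imports Defs
begin

definition pp :: "real \<Rightarrow> real" where "pp x = max x 0"

lemma pp_nonneg: "pp x \<ge> 0" by (simp add: pp_def)
lemma pp_pos: "x \<ge> 0 \<Longrightarrow> pp x = x" by (simp add: pp_def)
lemma pp_neg: "x \<le> 0 \<Longrightarrow> pp x = 0" by (simp add: pp_def)
lemma isCont_pp: "isCont pp x" unfolding pp_def by (intro continuous_intros)
lemma continuous_on_pp[continuous_intros]: "continuous_on S g \<Longrightarrow> continuous_on S (\<lambda>x. pp (g x))"
  unfolding pp_def by (intro continuous_intros)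

lemma DERIV_pp_pow0:
  assumes "m \<ge> 2"
  shows "DERIV (\<lambda>x. pp x ^ m) x :> real m * pp x ^ (m - 1)"
proof (cases "x > 0")
  case True
  have ev: "eventually (\<lambda>y. pp y ^ m = y ^ m) (nhds x)"
    using eventually_nhds_in_open[of "{0<..}" x] True
    by (auto elim!: eventually_mono simp: pp_pos)
  have "DERIV (\<lambda>y. y ^ m) x :> real m * x ^ (m - Suc 0)" by (rule DERIV_pow)
  then show ?thesis using DERIV_cong_ev[OF refl ev, of "real m * x ^ (m - Suc 0)"] True
    by (simp add: pp_pos)
next
  case False
  show ?thesis
  proof (cases "x < 0")
    case True
    have ev: "eventually (\<lambda>y. pp y ^ m = 0) (nhds x)"
      using eventually_nhds_in_open[of "{..<0}" x] True assms
      by (auto elim!: eventually_mono simp: pp_neg)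
    have "DERIV (\<lambda>y. 0::real) x :> 0" by simp
    have "DERIV (\<lambda>x. pp x ^ m) x :> 0" using DERIV_cong_ev[OF refl ev, of 0 0] by simp
    moreover have "real m * pp x ^ (m - 1) = 0" using True assms by (simp add: pp_neg)
    ultimately show ?thesis by metis
  next
    case False
    with \<open>\<not> x > 0\<close> have x0: "x = 0" by simp
    have lim: "((\<lambda>y. (pp y ^ m - pp 0 ^ m) / (y - 0)) \<longlongrightarrow> 0) (at 0)"
    proof (rule Lim_null_comparison)
      show "eventually (\<lambda>y. norm ((pp y ^ m - pp 0 ^ m) / (y - 0)) \<le> \<bar>y\<bar>) (at 0)"
      proof -
        have "eventually (\<lambda>y. y \<in> ball 0 1) (at (0::real))"
          by (rule eventually_at_in_open') auto
        then show ?thesis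
        proof (rule eventually_mono)
          fix y :: real assume y: "y \<in> ball 0 1"
          have p0: "pp 0 = 0" by (simp add: pp_def)
          have a1: "pp y \<le> \<bar>y\<bar>" by (simp add: pp_def)
          have a2: "\<bar>y\<bar> \<le> 1" using y by (simp add: dist_real_def)
          have "pp y ^ m \<le> pp y ^ 2" using assms pp_nonneg[of y] a1 a2
            by (intro power_decreasing) auto
          also have "\<dots> \<le> \<bar>y\<bar> ^ 2" using a1 pp_nonneg[of y] by (intro power_mono) auto
          finally have b: "pp y ^ m \<le> \<bar>y\<bar> * \<bar>y\<bar>" by (simp add: power2_eq_square)
          show "norm ((pp y ^ m - pp 0 ^ m) / (y - 0)) \<le> \<bar>y\<bar>"
          proof (cases "y = 0")
            case True then show ?thesis using assms by (simp add: p0)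
          next
            case False
            have "norm ((pp y ^ m - pp 0 ^ m) / (y - 0)) = pp y ^ m / \<bar>y\<bar>"
              using assms pp_nonneg[of y] by (simp add: p0 abs_divide)
            also have "\<dots> \<le> \<bar>y\<bar>" using b False by (simp add: divide_le_eq)
            finally show ?thesis .
          qed
        qed
      qed
      show "((\<lambda>y. \<bar>y\<bar>) \<longlongrightarrow> 0) (at (0::real))"
        using tendsto_rabs[OF tendsto_ident_at[of "0::real" UNIV]] by simp
    qed
    have "DERIV (\<lambda>x. pp x ^ m) 0 :> 0"
      unfolding has_field_derivative_iff using lim by simp
    moreover have "real m * pp x ^ (m - 1) = 0" using x0 assms by (simp add: pp_def)
    ultimately show ?thesis using x0 by metis
  qed
qed

lemma DERIV_pp_pow[derivative_intros]:
  assumes "(g has_real_derivative g') (at x within s)" "m \<ge> 2"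
  shows "((\<lambda>x. pp (g x) ^ m) has_real_derivative (real m * pp (g x) ^ (m - 1) * g')) (at x within s)"
  using DERIV_chain2[OF DERIV_pp_pow0[OF assms(2)] assms(1)] .

lemma int_pp:
  assumes "a \<le> t" "t \<le> b" "p \<ge> 1"
  shows "integral {a..b} (\<lambda>x. pp (x - t) ^ p) = (b - t) ^ Suc p / real (Suc p)"
proof -
  have "((\<lambda>x. pp (x - t) ^ p) has_integral
        (pp (b - t) ^ Suc p / real (Suc p) - pp (a - t) ^ Suc p / real (Suc p))) {a..b}"
  proof (rule fundamental_theorem_of_calculus)
    show "a \<le> b" using assms by simp
    fix x assume "x \<in> {a..b}"
    have d: "((\<lambda>x. x - t) has_real_derivative 1) (at x within {a..b})"
      by (auto intro!: derivative_eq_intros)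
    have "((\<lambda>x. pp (x - t) ^ Suc p / real (Suc p)) has_real_derivative
          (real (Suc p) * pp (x - t) ^ (Suc p - 1) * 1 / real (Suc p))) (at x within {a..b})"
      using assms by (intro DERIV_cdivide DERIV_pp_pow[OF d]) auto
    then show "((\<lambda>x. pp (x - t) ^ Suc p / real (Suc p)) has_vector_derivative pp (x - t) ^ p)
         (at x within {a..b})"
      by (simp add: has_real_derivative_iff_has_vector_derivative[symmetric])
  qed
  then show ?thesis using assms by (simp add: integral_unique pp_pos pp_neg)
qed

lemma int_pow:
  assumes "a \<le> b"
  shows "integral {a..b} (\<lambda>x. (x - c) ^ j) = ((b - c) ^ Suc j - (a - c) ^ Suc j) / real (Suc j)"
proof -
  have "((\<lambda>x. (x - c) ^ j) has_integral
        ((b - c) ^ Suc j / real (Suc j) - (a - c) ^ Suc j / real (Suc j))) {a..b}"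
  proof (rule fundamental_theorem_of_calculus)
    show "a \<le> b" using assms by simp
    fix x assume "x \<in> {a..b}"
    have d: "((\<lambda>x. x - c) has_real_derivative 1) (at x within {a..b})"
      by (auto intro!: derivative_eq_intros)
    have "((\<lambda>x. (x - c) ^ Suc j / real (Suc j)) has_real_derivative
          (real (Suc j) * (x - c) ^ (Suc j - Suc 0) * 1 / real (Suc j))) (at x within {a..b})"
      by (intro DERIV_cdivide DERIV_chain2[OF DERIV_pow d])
    then show "((\<lambda>x. (x - c) ^ Suc j / real (Suc j)) has_vector_derivative (x - c) ^ j)
         (at x within {a..b})"
      by (simp add: has_real_derivative_iff_has_vector_derivative[symmetric])
  qed
  then show ?thesis by (simp add: integral_unique diff_divide_distrib)
qed



lemma uknot_mono:
  assumes "a < b" "n \<ge> 1" "j \<le> j'" shows "uknot a b n j \<le> uknot a b n j'"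
  using assms unfolding uknot_def
  by (auto intro!: divide_right_mono mult_right_mono)

lemma uknot_strict:
  assumes "a < b" "n \<ge> 1" "j < j'" shows "uknot a b n j < uknot a b n j'"
  using assms unfolding uknot_def
  by (auto intro!: divide_strict_right_mono mult_strict_right_mono)

lemma uknot_0[simp]: "uknot a b n 0 = a" by (simp add: uknot_def)
lemma uknot_n: "n \<ge> 1 \<Longrightarrow> uknot a b n n = b" by (simp add: uknot_def)

lemma spline51I:
  assumes "\<And>x. (g has_real_derivative g' x) (at x)" "continuous_on {a..b} g'"
    "\<And>k. k \<in> {1..n} \<Longrightarrow> \<exists>p :: real poly. degree p \<le> 5 \<and>
        (\<forall>x\<in>{uknot a b n (k - 1)<..<uknot a b n k}. g x = poly p x)"
  shows "g \<in> spline51 a b n"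
  unfolding spline51_def C1_on_interval_def
  using assms by (auto intro: has_field_derivative_at_within)

locale G =
  fixes a b :: real and n :: nat and \<tau> \<omega> :: "nat \<Rightarrow> real"
  assumes ab: "a < b" and n1: "n \<ge> 1" and gr: "gaussian_rule51 a b n \<tau> \<omega>"
begin

definition Eq :: "(real \<Rightarrow> real) \<Rightarrow> real" where
  "Eq g = integral {a..b} g - (\<Sum>k=1..2*n+1. \<omega> k * g (\<tau> k))"

lemma tau_in: "k \<in> {1..2*n+1} \<Longrightarrow> \<tau> k \<in> {a..b}"
  using gr unfolding gaussian_rule51_def by auto
lemma tau_ge: "k \<in> {1..2*n+1} \<Longrightarrow> a \<le> \<tau> k" using tau_in by auto
lemma tau_le: "k \<in> {1..2*n+1} \<Longrightarrow> \<tau> k \<le> b" using tau_in by auto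
lemma omega_pos: "k \<in> {1..2*n+1} \<Longrightarrow> \<omega> k > 0"
  using gr unfolding gaussian_rule51_def by auto
lemma tau_inj: "inj_on \<tau> {1..2*n+1}"
  using gr unfolding gaussian_rule51_def by auto

lemma exact: "g \<in> spline51 a b n \<Longrightarrow> Eq g = 0"
  using gr unfolding gaussian_rule51_def Eq_def by (simp only: right_minus_eq)

lemma Eq_cong: "(\<And>x. x \<in> {a..b} \<Longrightarrow> g x = h x) \<Longrightarrow> Eq g = Eq h"
proof -
  assume h: "\<And>x. x \<in> {a..b} \<Longrightarrow> g x = h x"
  have "integral {a..b} g = integral {a..b} h" by (rule integral_cong) (rule h)
  moreover have "(\<Sum>k=1..2*n+1. \<omega> k * g (\<tau> k)) = (\<Sum>k=1..2*n+1. \<omega> k * h (\<tau> k))"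
  proof (rule sum.cong[OF refl])
    fix k assume "k \<in> {1..2*n+1}"
    then show "\<omega> k * g (\<tau> k) = \<omega> k * h (\<tau> k)" using h[OF tau_in] by simp
  qed
  ultimately show ?thesis unfolding Eq_def by simp
qed

lemma Eq_pow: "j \<le> 5 \<Longrightarrow> Eq (\<lambda>x. (x - c) ^ j) = 0"
proof (rule exact, rule spline51I)
  fix x
  show "((\<lambda>x. (x - c) ^ j) has_real_derivative (real j * (x - c) ^ (j - Suc 0) * 1)) (at x)"
    by (rule DERIV_chain2[OF DERIV_pow]) (auto intro!: derivative_eq_intros)
next
  show "continuous_on {a..b} (\<lambda>x. real j * (x - c) ^ (j - Suc 0) * 1)"
    by (intro continuous_intros)
next
  fix k assume "j \<le> 5"
  show "\<exists>p :: real poly. degree p \<le> 5 \<and>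
        (\<forall>x\<in>{uknot a b n (k - 1)<..<uknot a b n k}. (x - c) ^ j = poly p x)"
    by (rule exI[of _ "[:-c, 1:] ^ j"]) (simp add: degree_linear_power \<open>j \<le> 5\<close> poly_power)
qed

lemma Eq_knot:
  assumes "1 \<le> i" "i \<le> n - 1" "2 \<le> p" "p \<le> 5"
  shows "Eq (\<lambda>x. pp (x - uknot a b n i) ^ p) = 0"
proof (rule exact, rule spline51I)
  fix x
  show "((\<lambda>x. pp (x - uknot a b n i) ^ p) has_real_derivative
      (real p * pp (x - uknot a b n i) ^ (p - 1) * 1)) (at x)"
    using assms by (intro DERIV_pp_pow) (auto intro!: derivative_eq_intros)
next
  show "continuous_on {a..b} (\<lambda>x. real p * pp (x - uknot a b n i) ^ (p - 1) * 1)"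
    by (intro continuous_intros)
next
  fix k assume k: "k \<in> {1..n}"
  show "\<exists>q :: real poly. degree q \<le> 5 \<and>
        (\<forall>x\<in>{uknot a b n (k - 1)<..<uknot a b n k}. pp (x - uknot a b n i) ^ p = poly q x)"
  proof (cases "k \<le> i")
    case True
    have "uknot a b n k \<le> uknot a b n i" using True ab n1 by (intro uknot_mono)
    then show ?thesis using assms
      by (intro exI[of _ 0]) (auto simp: pp_neg)
  next
    case False
    have "uknot a b n i \<le> uknot a b n (k - 1)" using False ab n1 by (intro uknot_mono) auto
    then show ?thesis using assms
      by (intro exI[of _ "[:- uknot a b n i, 1:] ^ p"])
         (auto simp: pp_pos degree_linear_power poly_power)
  qed
qed

lemma sum_omega: "(\<Sum>k=1..2*n+1. \<omega> k) = b - a"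
proof -
  have "Eq (\<lambda>x. (x - 0) ^ 0) = 0" by (rule Eq_pow) simp
  then show ?thesis using int_pow[of a b 0 0] ab unfolding Eq_def by simp
qed

lemma Eq_pp:
  assumes "a \<le> t" "t \<le> b" "p \<ge> 1"
  shows "Eq (\<lambda>x. pp (x - t) ^ p) = (b - t) ^ Suc p / real (Suc p) - (\<Sum>k=1..2*n+1. \<omega> k * pp (\<tau> k - t) ^ p)"
  unfolding Eq_def using int_pp[OF assms] by simp

definition K0 :: "real \<Rightarrow> real" where
  "K0 t = (b - t) ^ 6 / 6 - (\<Sum>k=1..2*n+1. \<omega> k * pp (\<tau> k - t) ^ 5)"
definition K1 :: "real \<Rightarrow> real" where
  "K1 t = - ((b - t) ^ 5) + 5 * (\<Sum>k=1..2*n+1. \<omega> k * pp (\<tau> k - t) ^ 4)"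
definition K2 :: "real \<Rightarrow> real" where
  "K2 t = 5 * (b - t) ^ 4 - 20 * (\<Sum>k=1..2*n+1. \<omega> k * pp (\<tau> k - t) ^ 3)"
definition K3 :: "real \<Rightarrow> real" where
  "K3 t = - 20 * (b - t) ^ 3 + 60 * (\<Sum>k=1..2*n+1. \<omega> k * pp (\<tau> k - t) ^ 2)"
definition K4 :: "real \<Rightarrow> real" where
  "K4 t = 60 * (b - t) ^ 2 - 120 * (\<Sum>k=1..2*n+1. \<omega> k * pp (\<tau> k - t))"

lemma K0_Eq: "a \<le> t \<Longrightarrow> t \<le> b \<Longrightarrow> K0 t = Eq (\<lambda>x. pp (x - t) ^ 5)"
  by (subst Eq_pp) (auto simp: K0_def)
lemma K1_Eq: "a \<le> t \<Longrightarrow> t \<le> b \<Longrightarrow> K1 t = -5 * Eq (\<lambda>x. pp (x - t) ^ 4)"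
  by (subst Eq_pp) (auto simp: K1_def algebra_simps)
lemma K2_Eq: "a \<le> t \<Longrightarrow> t \<le> b \<Longrightarrow> K2 t = 20 * Eq (\<lambda>x. pp (x - t) ^ 3)"
  by (subst Eq_pp) (auto simp: K2_def algebra_simps)
lemma K3_Eq: "a \<le> t \<Longrightarrow> t \<le> b \<Longrightarrow> K3 t = -60 * Eq (\<lambda>x. pp (x - t) ^ 2)"
  by (subst Eq_pp) (auto simp: K3_def algebra_simps)
lemma K4_Eq: "a \<le> t \<Longrightarrow> t \<le> b \<Longrightarrow> K4 t = 120 * Eq (\<lambda>x. pp (x - t) ^ 1)"
  by (subst Eq_pp) (auto simp: K4_def algebra_simps power2_eq_square)

end


lemma d_pp_term: "2 \<le> m \<Longrightarrow> DERIV (\<lambda>t. pp (c - t) ^ m) t :> - (real m * pp (c - t) ^ (m - 1))"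
proof -
  assume m: "2 \<le> m"
  have d: "((\<lambda>t. c - t) has_real_derivative -1) (at t)" by (auto intro!: derivative_eq_intros)
  show ?thesis using DERIV_pp_pow[OF d m] by simp
qed

lemma d_bpow: "DERIV (\<lambda>t. (b - t) ^ Suc m) t :> - (real (Suc m) * (b - t) ^ m)"
proof -
  have d: "((\<lambda>t. b - t) has_real_derivative -1) (at t)" by (auto intro!: derivative_eq_intros)
  show ?thesis using DERIV_chain2[OF DERIV_pow d, of "Suc m"] by simp
qed

context G begin

lemma d_sum: "2 \<le> m \<Longrightarrow> DERIV (\<lambda>t. \<Sum>k=1..2*n+1. \<omega> k * pp (\<tau> k - t) ^ m) t :>
     - (real m * (\<Sum>k=1..2*n+1. \<omega> k * pp (\<tau> k - t) ^ (m - 1)))"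
proof -
  assume m: "2 \<le> m"
  have "DERIV (\<lambda>t. \<Sum>k=1..2*n+1. \<omega> k * pp (\<tau> k - t) ^ m) t :>
     (\<Sum>k=1..2*n+1. \<omega> k * - (real m * pp (\<tau> k - t) ^ (m - 1)))"
    by (intro DERIV_sum DERIV_cmult d_pp_term m)
  then show ?thesis by (simp add: sum_distrib_left sum_negf algebra_simps)
qed

lemma K0_deriv: "DERIV K0 t :> K1 t"
proof -
  have d: "DERIV K0 t :> (- (real 6 * (b - t) ^ 5)) / 6 - (- (real 5 * (\<Sum>k=1..2*n+1. \<omega> k * pp (\<tau> k - t) ^ (5 - 1))))"
    unfolding K0_def[abs_def]
    by (intro DERIV_diff DERIV_cdivide d_sum) (use d_bpow[of b 5 t] in auto)
  have e: "(- (real 6 * (b - t) ^ 5)) / 6 - (- (real 5 * (\<Sum>k=1..2*n+1. \<omega> k * pp (\<tau> k - t) ^ (5 - 1)))) = K1 t"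
    unfolding K1_def by (simp del: sum.cl_ivl_Suc add: algebra_simps)
  from d e show ?thesis by simp
qed

lemma K1_deriv: "DERIV K1 t :> K2 t"
proof -
  have d: "DERIV K1 t :> - (- (real 5 * (b - t) ^ 4)) + 5 * (- (real 4 * (\<Sum>k=1..2*n+1. \<omega> k * pp (\<tau> k - t) ^ (4 - 1))))"
    unfolding K1_def[abs_def]
    by (intro DERIV_add DERIV_minus DERIV_cmult d_sum) (use d_bpow[of b 4 t] in auto)
  have e: "- (- (real 5 * (b - t) ^ 4)) + 5 * (- (real 4 * (\<Sum>k=1..2*n+1. \<omega> k * pp (\<tau> k - t) ^ (4 - 1)))) = K2 t"
    unfolding K2_def by (simp del: sum.cl_ivl_Suc add: algebra_simps)
  from d e show ?thesis by simp
qed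

lemma K2_deriv: "DERIV K2 t :> K3 t"
proof -
  have d: "DERIV K2 t :> 5 * (- (real 4 * (b - t) ^ 3)) - 20 * (- (real 3 * (\<Sum>k=1..2*n+1. \<omega> k * pp (\<tau> k - t) ^ (3 - 1))))"
    unfolding K2_def[abs_def]
    by (intro DERIV_diff DERIV_cmult d_sum) (use d_bpow[of b 3 t] in auto)
  have e: "5 * (- (real 4 * (b - t) ^ 3)) - 20 * (- (real 3 * (\<Sum>k=1..2*n+1. \<omega> k * pp (\<tau> k - t) ^ (3 - 1)))) = K3 t"
    unfolding K3_def by (simp del: sum.cl_ivl_Suc add: algebra_simps)
  from d e show ?thesis by simp
qed

lemma K3_deriv: "DERIV K3 t :> K4 t"
proof -
  have d: "DERIV K3 t :> -20 * (- (real 3 * (b - t) ^ 2)) + 60 * (- (real 2 * (\<Sum>k=1..2*n+1. \<omega> k * pp (\<tau> k - t) ^ (2 - 1))))"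
    unfolding K3_def[abs_def]
    by (intro DERIV_add DERIV_cmult d_sum) (use d_bpow[of b 2 t] in auto)
  have e: "-20 * (- (real 3 * (b - t) ^ 2)) + 60 * (- (real 2 * (\<Sum>k=1..2*n+1. \<omega> k * pp (\<tau> k - t) ^ (2 - 1)))) = K4 t"
    unfolding K4_def by (simp del: sum.cl_ivl_Suc add: algebra_simps)
  from d e show ?thesis by simp
qed

lemma K0_cont: "continuous_on S K0"
  unfolding K0_def[abs_def] by (intro continuous_intros) auto
lemma K4_cont: "continuous_on S K4"
  unfolding K4_def[abs_def] by (intro continuous_intros)

end

context G begin

lemma knot_in: "i \<le> n \<Longrightarrow> uknot a b n i \<in> {a..b}"
  using uknot_mono[OF ab n1, of 0 i] uknot_mono[OF ab n1, of i n] uknot_n[OF n1] by auto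

lemma Eq_ppa: "1 \<le> p \<Longrightarrow> p \<le> 5 \<Longrightarrow> Eq (\<lambda>x. pp (x - a) ^ p) = 0"
proof -
  assume p: "1 \<le> p" "p \<le> 5"
  have "Eq (\<lambda>x. pp (x - a) ^ p) = Eq (\<lambda>x. (x - a) ^ p)"
    by (rule Eq_cong) (simp add: pp_pos)
  also have "\<dots> = 0" using p by (intro Eq_pow)
  finally show ?thesis .
qed

lemma K_a: "K0 a = 0" "K1 a = 0" "K2 a = 0" "K3 a = 0" "K4 a = 0"
  using ab K0_Eq[of a] K1_Eq[of a] K2_Eq[of a] K3_Eq[of a] K4_Eq[of a]
    Eq_ppa[of 5] Eq_ppa[of 4] Eq_ppa[of 3] Eq_ppa[of 2] Eq_ppa[of 1] by auto

lemma sum_pp_b: "m \<ge> 1 \<Longrightarrow> (\<Sum>k=1..2*n+1. \<omega> k * pp (\<tau> k - b) ^ m) = 0"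
  by (rule sum.neutral) (auto simp: pp_neg tau_le)

lemma K_b: "K0 b = 0" "K1 b = 0" "K2 b = 0" "K3 b = 0" "K4 b = 0"
proof -
  have s: "(\<Sum>k=1..2*n+1. \<omega> k * pp (\<tau> k - b)) = 0"
    using sum_pp_b[of 1] by simp
  show "K0 b = 0" "K1 b = 0" "K2 b = 0" "K3 b = 0" "K4 b = 0"
    unfolding K0_def K1_def K2_def K3_def K4_def
    using sum_pp_b[of 5] sum_pp_b[of 4] sum_pp_b[of 3] sum_pp_b[of 2] s by simp_all
qed

lemma K_knot:
  assumes "1 \<le> i" "i \<le> n - 1"
  shows "K0 (uknot a b n i) = 0" "K1 (uknot a b n i) = 0" "K2 (uknot a b n i) = 0" "K3 (uknot a b n i) = 0"
proof -
  have "uknot a b n i \<in> {a..b}" using assms by (intro knot_in) auto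
  then show "K0 (uknot a b n i) = 0" "K1 (uknot a b n i) = 0" "K2 (uknot a b n i) = 0" "K3 (uknot a b n i) = 0"
    using K0_Eq K1_Eq K2_Eq K3_Eq Eq_knot[OF assms, of 5] Eq_knot[OF assms, of 4]
      Eq_knot[OF assms, of 3] Eq_knot[OF assms, of 2] by auto
qed

lemma K0_small:
  assumes "a \<le> t" "\<And>k. k \<in> {1..2*n+1} \<Longrightarrow> t \<le> \<tau> k"
  shows "K0 t = (t - a) ^ 6 / 6"
proof -
  have e: "Eq (\<lambda>x. (x - t) ^ 5) = 0" by (rule Eq_pow) simp
  have s: "(\<Sum>k=1..2*n+1. \<omega> k * pp (\<tau> k - t) ^ 5) = (\<Sum>k=1..2*n+1. \<omega> k * (\<tau> k - t) ^ 5)"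
    by (rule sum.cong[OF refl]) (simp add: pp_pos assms)
  have "integral {a..b} (\<lambda>x. (x - t) ^ 5) = ((b - t) ^ 6 - (a - t) ^ 6) / 6"
    using int_pow[of a b t 5] ab by simp
  moreover have "(a - t) ^ 6 = (t - a) ^ 6"
    by (metis minus_diff_eq power_minus_even even_numeral)
  ultimately show ?thesis using e s unfolding Eq_def K0_def
    by (simp add: algebra_simps del: sum.cl_ivl_Suc)
qed

end


lemma rolle_set:
  fixes g g' :: "real \<Rightarrow> real"
  assumes deriv: "\<And>x. DERIV g x :> g' x"
  shows "finite S \<Longrightarrow> S \<noteq> {} \<Longrightarrow> (\<forall>x\<in>S. g x = 0) \<Longrightarrow>
    \<exists>T. finite T \<and> T \<inter> S = {} \<and> (\<forall>x\<in>T. Min S < x \<and> x < Max S) \<and> (\<forall>x\<in>T. g' x = 0)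
        \<and> card S \<le> card T + 1"
proof (induction "card S" arbitrary: S)
  case 0
  then show ?case by simp
next
  case (Suc m)
  show ?case
  proof (cases "m = 0")
    case True
    then show ?thesis using Suc.hyps(2) by (intro exI[of _ "{}"]) auto
  next
    case False
    define M where "M = Max S"
    define S' where "S' = S - {M}"
    have MS: "M \<in> S" using Suc.prems M_def by auto
    have cS': "card S' = m" using Suc.hyps(2) Suc.prems MS unfolding S'_def by simp
    have fS': "finite S'" using Suc.prems S'_def by simp
    have neS': "S' \<noteq> {}" using cS' False by auto
    have zS': "\<forall>x\<in>S'. g x = 0" using Suc.prems S'_def by auto
    obtain T' where T': "finite T'" "T' \<inter> S' = {}" "\<forall>x\<in>T'. Min S' < x \<and> x < Max S'"
      "\<forall>x\<in>T'. g' x = 0" "card S' \<le> card T' + 1"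
      using Suc.hyps(1)[OF cS'[symmetric] fS' neS' zS'] by blast
    define m' where "m' = Max S'"
    have m'S': "m' \<in> S'" using fS' neS' m'_def by simp
    have m'M: "m' < M"
    proof -
      have "m' \<le> M" using m'S' Suc.prems M_def S'_def by auto
      moreover have "m' \<noteq> M" using m'S' S'_def by auto
      ultimately show ?thesis by simp
    qed
    have gm': "g m' = 0" using m'S' zS' by auto
    have gM: "g M = 0" using MS Suc.prems by auto
    have cont: "continuous_on {m'..M} g"
      using deriv by (meson DERIV_isCont continuous_at_imp_continuous_on)
    have diff: "\<And>x. g differentiable (at x)"
      using deriv real_differentiable_def by blast
    obtain z where z: "m' < z" "z < M" "DERIV g z :> 0"
      using Rolle[OF m'M, of g] gm' gM cont diff by auto
    have gz: "g' z = 0" using DERIV_unique[OF z(3) deriv[of z]] by simp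
    have zT': "z \<notin> T'" using T'(3) z(1) m'_def by fastforce
    have zS: "z \<notin> S"
    proof
      assume "z \<in> S"
      then have "z \<in> S'" using z(2) S'_def by auto
      then have "z \<le> m'" using fS' m'_def by simp
      then show False using z(1) by simp
    qed
    have MT': "M \<notin> T'" using T'(3) m'M m'_def by fastforce
    have minle: "Min S \<le> Min S'" using fS' neS' Suc.prems S'_def by (auto intro!: Min_antimono)
    have minm': "Min S \<le> m'" using minle fS' neS' m'S' by (meson Min_le order_trans)
    show ?thesis
    proof (intro exI[of _ "insert z T'"] conjI)
      show "finite (insert z T')" using T'(1) by simp
      show "insert z T' \<inter> S = {}" using zS T'(2) MT' S'_def by auto
      show "\<forall>x\<in>insert z T'. Min S < x \<and> x < Max S"
        using T'(3) minle z minm' m'_def M_def m'M by fastforce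
      show "\<forall>x\<in>insert z T'. g' x = 0" using gz T'(4) by auto
      show "card S \<le> card (insert z T') + 1" using T'(1,5) zT' cS' Suc.hyps(2) by simp
    qed
  qed
qed

context G begin

definition X :: "real set" where "X = uknot a b n ` {1..n-1}"

lemma X_finite: "finite X" unfolding X_def by simp
lemma X_card: "card X = n - 1"
proof -
  have "inj_on (uknot a b n) {1..n-1}"
    by (rule inj_onI) (metis uknot_strict[OF ab n1] linorder_neqE_nat less_irrefl)
  then show ?thesis unfolding X_def by (simp add: card_image)
qed
lemma X_sub: "X \<subseteq> {a<..<b}"
proof
  fix x assume "x \<in> X"
  then obtain i where i: "1 \<le> i" "i \<le> n - 1" "x = uknot a b n i" unfolding X_def by auto
  have "uknot a b n 0 < uknot a b n i" using i ab n1 by (intro uknot_strict) auto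
  moreover have "uknot a b n i < uknot a b n n" using i ab n1 by (intro uknot_strict) auto
  ultimately show "x \<in> {a<..<b}" using i uknot_n[OF n1] by simp
qed
lemma ab_notin_X: "a \<notin> X" "b \<notin> X" using X_sub by auto

definition B0 where "B0 = X \<union> {a, b}"
lemma B0_card: "card B0 = n + 1"
  using X_card X_finite ab_notin_X ab n1 unfolding B0_def by (simp add: card_insert_if)
lemma B0_finite: "finite B0" using X_finite unfolding B0_def by simp
lemma B0_sub: "B0 \<subseteq> {a..b}" using X_sub ab unfolding B0_def by auto

lemma step_lemma:
  assumes deriv: "\<And>x. DERIV g x :> g' x"
    and S: "finite S" "B0 \<subseteq> S" "S \<subseteq> {a..b}" "\<forall>x\<in>S. g x = 0"
    and B: "\<forall>x\<in>B0. g' x = 0"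
  shows "\<exists>S'. finite S' \<and> B0 \<subseteq> S' \<and> S' \<subseteq> {a..b} \<and> (\<forall>x\<in>S'. g' x = 0) \<and> card S + n \<le> card S'"
proof -
  have ne: "S \<noteq> {}" using S(2) unfolding B0_def by auto
  obtain T where T: "finite T" "T \<inter> S = {}" "\<forall>x\<in>T. Min S < x \<and> x < Max S" "\<forall>x\<in>T. g' x = 0"
    "card S \<le> card T + 1"
    using rolle_set[OF deriv S(1) ne S(4)] by blast
  have "Min S \<ge> a" "Max S \<le> b" using S(1,3) ne by auto
  then have Tab: "T \<subseteq> {a..b}" using T(3) by fastforce
  have disj: "T \<inter> B0 = {}" using T(2) S(2) by auto
  have "card (T \<union> B0) = card T + card B0" using T(1) B0_finite disj by (simp add: card_Un_disjoint)
  then show ?thesis using T Tab B0_card B0_finite B0_sub B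
    by (intro exI[of _ "T \<union> B0"]) auto
qed

lemma last_step:
  assumes S: "finite S" "B0 \<subseteq> S" "S \<subseteq> {a..b}" "\<forall>x\<in>S. K3 x = 0"
  shows "\<exists>S'. finite S' \<and> S' \<subseteq> {a..b} \<and> a \<in> S' \<and> b \<in> S' \<and> (\<forall>x\<in>S'. K4 x = 0) \<and> S' \<inter> X = {}
     \<and> card S + 1 \<le> card S'"
proof -
  have ne: "S \<noteq> {}" using S(2) unfolding B0_def by auto
  obtain T where T: "finite T" "T \<inter> S = {}" "\<forall>x\<in>T. Min S < x \<and> x < Max S" "\<forall>x\<in>T. K4 x = 0"
    "card S \<le> card T + 1"
    using rolle_set[OF K3_deriv S(1) ne S(4)] by blast
  have "Min S \<ge> a" "Max S \<le> b" using S(1,3) ne by auto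
  then have Tab: "T \<subseteq> {a..b}" using T(3) by fastforce
  have abS: "a \<in> S" "b \<in> S" using S(2) unfolding B0_def by auto
  have disj: "T \<inter> {a, b} = {}" using T(2) abS by auto
  have c: "card (T \<union> {a, b}) = card T + 2" using T(1) disj ab
    by (simp add: card_Un_disjoint)
  have "T \<inter> X = {}" using T(2) S(2) unfolding B0_def by auto
  then show ?thesis using T Tab c ab K_a K_b ab_notin_X
    by (intro exI[of _ "T \<union> {a, b}"]) auto
qed

lemma B0_zeros: "\<forall>x\<in>B0. K0 x = 0" "\<forall>x\<in>B0. K1 x = 0" "\<forall>x\<in>B0. K2 x = 0" "\<forall>x\<in>B0. K3 x = 0"
  unfolding B0_def X_def using K_a K_b K_knot by auto

lemma chain:
  assumes S: "finite S0" "B0 \<subseteq> S0" "S0 \<subseteq> {a..b}" "\<forall>x\<in>S0. K0 x = 0"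
  shows "\<exists>S4. finite S4 \<and> S4 \<subseteq> {a..b} \<and> a \<in> S4 \<and> b \<in> S4 \<and> (\<forall>x\<in>S4. K4 x = 0) \<and> S4 \<inter> X = {}
     \<and> card S0 + 3 * n + 1 \<le> card S4"
proof -
  obtain S1 where S1: "finite S1" "B0 \<subseteq> S1" "S1 \<subseteq> {a..b}" "\<forall>x\<in>S1. K1 x = 0" "card S0 + n \<le> card S1"
    using step_lemma[OF K0_deriv S B0_zeros(2)] by blast
  obtain S2 where S2: "finite S2" "B0 \<subseteq> S2" "S2 \<subseteq> {a..b}" "\<forall>x\<in>S2. K2 x = 0" "card S1 + n \<le> card S2"
    using step_lemma[OF K1_deriv S1(1-4) B0_zeros(3)] by blast
  obtain S3 where S3: "finite S3" "B0 \<subseteq> S3" "S3 \<subseteq> {a..b}" "\<forall>x\<in>S3. K3 x = 0" "card S2 + n \<le> card S3"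
    using step_lemma[OF K2_deriv S2(1-4) B0_zeros(4)] by blast
  obtain S4 where "finite S4 \<and> S4 \<subseteq> {a..b} \<and> a \<in> S4 \<and> b \<in> S4 \<and> (\<forall>x\<in>S4. K4 x = 0) \<and> S4 \<inter> X = {}
     \<and> card S3 + 1 \<le> card S4"
    using last_step[OF S3(1-4)] by blast
  then show ?thesis using S1(5) S2(5) S3(5) by (intro exI[of _ S4]) auto
qed

end


lemma chain_le: "(\<forall>i<m. z i < z (Suc i)) \<Longrightarrow> i \<le> m \<Longrightarrow> (z 0 :: real) \<le> z i"
proof (induction i)
  case 0 then show ?case by simp
next
  case (Suc i)
  then have "z i < z (Suc i)" "z 0 \<le> z i" by auto
  then show ?case by simp
qed

lemma enum_set:
  fixes S :: "real set"
  assumes "finite S" "S \<subseteq> {a..b}" "a \<in> S" "b \<in> S"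
  shows "\<exists>z. (\<forall>i. Suc i < card S \<longrightarrow> z i < z (Suc i)) \<and> (\<forall>i<card S. z i \<in> S) \<and> z 0 = a
           \<and> z (card S - 1) = b"
proof -
  obtain l where l: "sorted_wrt (<) l" "set l = S" "length l = card S"
    using sorted_list_of_set.finite_set_strict_sorted[OF assms(1)] by auto
  have nth_in: "\<And>i. i < card S \<Longrightarrow> l ! i \<in> S" using l by (metis nth_mem)
  obtain p where p: "p < card S" "l ! p = a" using assms(3) l by (metis in_set_conv_nth)
  obtain q where q: "q < card S" "l ! q = b" using assms(4) l by (metis in_set_conv_nth)
  have p0: "p = 0"
  proof (rule ccontr)
    assume "p \<noteq> 0"
    then have "l ! 0 < l ! p" using sorted_wrt_nth_less[OF l(1), of 0 p] p l(3) by simp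
    moreover have "l ! 0 \<in> S" using nth_in p by simp
    ultimately show False using assms(2) p by force
  qed
  have qL: "q = card S - 1"
  proof (rule ccontr)
    assume "q \<noteq> card S - 1"
    then have "q < card S - 1" using q by simp
    then have "l ! q < l ! (card S - 1)" using sorted_wrt_nth_less[OF l(1), of q "card S - 1"] l(3) by simp
    moreover have "l ! (card S - 1) \<in> S" using nth_in q by simp
    ultimately show False using assms(2) q by force
  qed
  show ?thesis
    using l p q p0 qL nth_in
    by (intro exI[of _ "\<lambda>i. l ! i"]) (auto intro: sorted_wrt_nth_less)
qed

lemma chain_le2: "(\<forall>i. Suc i < L \<longrightarrow> z i < z (Suc i)) \<Longrightarrow> i \<le> j \<Longrightarrow> j < L \<Longrightarrow> (z i :: real) \<le> z j"
proof (induction j)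
  case 0 then show ?case by simp
next
  case (Suc j)
  show ?case
  proof (cases "i = Suc j")
    case True then show ?thesis by simp
  next
    case False
    then have "z i \<le> z j" using Suc by auto
    moreover have "z j < z (Suc j)" using Suc.prems by auto
    ultimately show ?thesis by simp
  qed
qed

context G begin

lemma K4_form0:
  assumes "\<And>k. k \<in> {1..2*n+1} \<Longrightarrow> \<tau> k \<le> u \<or> v \<le> \<tau> k" "u \<le> t" "t \<le> v"
  shows "K4 t = 60 * (b - t) ^ 2 - 120 * ((\<Sum>k=1..2*n+1. if v \<le> \<tau> k then \<omega> k * \<tau> k else 0)
            - t * (\<Sum>k=1..2*n+1. if v \<le> \<tau> k then \<omega> k else 0))"
proof -
  have "(\<Sum>k=1..2*n+1. \<omega> k * pp (\<tau> k - t)) =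
        (\<Sum>k=1..2*n+1. (if v \<le> \<tau> k then \<omega> k * \<tau> k else 0) - t * (if v \<le> \<tau> k then \<omega> k else 0))"
  proof (rule sum.cong[OF refl])
    fix k assume k: "k \<in> {1..2*n+1}"
    show "\<omega> k * pp (\<tau> k - t) = (if v \<le> \<tau> k then \<omega> k * \<tau> k else 0) - t * (if v \<le> \<tau> k then \<omega> k else 0)"
    proof (cases "v \<le> \<tau> k")
      case True then show ?thesis using assms by (simp add: pp_pos algebra_simps)
    next
      case False then have "\<tau> k \<le> u" using assms(1)[OF k] by simp
      then show ?thesis using False assms by (simp add: pp_neg)
    qed
  qed
  also have "\<dots> = (\<Sum>k=1..2*n+1. if v \<le> \<tau> k then \<omega> k * \<tau> k else 0)
            - t * (\<Sum>k=1..2*n+1. if v \<le> \<tau> k then \<omega> k else 0)"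
    by (simp only: sum_subtractf sum_distrib_left)
  finally show ?thesis unfolding K4_def by simp
qed

lemma K4_form:
  assumes "\<And>k. k \<in> {1..2*n+1} \<Longrightarrow> \<tau> k \<le> u \<or> v \<le> \<tau> k"
  shows "\<exists>A B. \<forall>t. u \<le> t \<and> t \<le> v \<longrightarrow> K4 t = 60 * (b - t) ^ 2 - 120 * (A - t * B)"
  using K4_form0[OF assms] by blast

lemma quad3:
  fixes u w v A B :: real
  assumes "u < w" "w < v"
    "60 * (b - u) ^ 2 - 120 * (A - u * B) = 0"
    "60 * (b - w) ^ 2 - 120 * (A - w * B) = 0"
    "60 * (b - v) ^ 2 - 120 * (A - v * B) = 0"
  shows False
proof -
  have i1: "60 * (b - u) ^ 2 - 120 * (A - u * B) - (60 * (b - w) ^ 2 - 120 * (A - w * B))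
      = (u - w) * (60 * (u + w) - 120 * b + 120 * B)"
    by (simp add: power2_eq_square algebra_simps)
  have i2: "60 * (b - w) ^ 2 - 120 * (A - w * B) - (60 * (b - v) ^ 2 - 120 * (A - v * B))
      = (w - v) * (60 * (w + v) - 120 * b + 120 * B)"
    by (simp add: power2_eq_square algebra_simps)
  have e1: "(u - w) * (60 * (u + w) - 120 * b + 120 * B) = 0"
    using assms(3,4) i1 by simp
  have e2: "(w - v) * (60 * (w + v) - 120 * b + 120 * B) = 0"
    using assms(4,5) i2 by simp
  have "60 * (u + w) - 120 * b + 120 * B = 0" using e1 assms(1) by simp
  moreover have "60 * (w + v) - 120 * b + 120 * B = 0" using e2 assms(2) by simp
  ultimately show False using assms(1,2) by simp
qed

lemma K4_window:
  assumes "u < w" "w < v" "K4 u = 0" "K4 w = 0" "K4 v = 0"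
  shows "\<exists>k\<in>{1..2*n+1}. u < \<tau> k \<and> \<tau> k < v"
proof (rule ccontr)
  assume "\<not> ?thesis"
  then have out: "\<And>k. k \<in> {1..2*n+1} \<Longrightarrow> \<tau> k \<le> u \<or> v \<le> \<tau> k" by force
  obtain A B where AB: "\<And>t. u \<le> t \<Longrightarrow> t \<le> v \<Longrightarrow> K4 t = 60 * (b - t) ^ 2 - 120 * (A - t * B)"
    using K4_form[OF out] by blast
  show False
    using quad3[OF assms(1,2), of A B] assms(3-5) AB[of u] AB[of w] AB[of v] assms(1,2) by simp
qed

lemma K4_left:
  assumes "a < v" "K4 v = 0"
  shows "\<exists>k\<in>{1..2*n+1}. a \<le> \<tau> k \<and> \<tau> k < v"
proof (rule ccontr)
  assume "\<not> ?thesis"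
  then have big: "\<And>k. k \<in> {1..2*n+1} \<Longrightarrow> v \<le> \<tau> k" using tau_ge by force
  define A where "A = (\<Sum>k=1..2*n+1. \<omega> k * \<tau> k)"
  have rep: "\<And>t. t \<le> v \<Longrightarrow> K4 t = 60 * (b - t) ^ 2 - 120 * (A - t * (b - a))"
  proof -
    fix t assume t: "t \<le> v"
    have "(\<Sum>k=1..2*n+1. \<omega> k * pp (\<tau> k - t)) = (\<Sum>k=1..2*n+1. \<omega> k * \<tau> k - t * \<omega> k)"
    proof (rule sum.cong[OF refl])
      fix k assume "k \<in> {1..2*n+1}"
      then have "v \<le> \<tau> k" by (rule big)
      then have e: "pp (\<tau> k - t) = \<tau> k - t" using t by (simp add: pp_pos)
      show "\<omega> k * pp (\<tau> k - t) = \<omega> k * \<tau> k - t * \<omega> k"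
        unfolding e by (simp add: algebra_simps)
    qed
    also have "\<dots> = A - t * (b - a)"
      unfolding A_def sum_omega[symmetric] by (simp only: sum_subtractf sum_distrib_left)
    finally show "K4 t = 60 * (b - t) ^ 2 - 120 * (A - t * (b - a))" unfolding K4_def by simp
  qed
  have "K4 a = 0" by (rule K_a)
  then have "60 * (b - a) ^ 2 - 120 * (A - a * (b - a)) = 0" using rep[of a] assms by simp
  moreover have "60 * (b - v) ^ 2 - 120 * (A - v * (b - a)) = 0" using rep[of v] assms by simp
  moreover have "60 * (b - v) ^ 2 - 120 * (A - v * (b - a)) - (60 * (b - a) ^ 2 - 120 * (A - a * (b - a)))
      = 60 * (v - a) ^ 2" by (simp add: power2_eq_square algebra_simps)
  ultimately have "60 * (v - a) ^ 2 = 0" by simp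
  then show False using assms by simp
qed

lemma K4_right:
  assumes "u < b" "K4 u = 0"
  shows "\<exists>k\<in>{1..2*n+1}. u < \<tau> k \<and> \<tau> k \<le> b"
proof (rule ccontr)
  assume "\<not> ?thesis"
  then have small: "\<And>k. k \<in> {1..2*n+1} \<Longrightarrow> \<tau> k \<le> u" using tau_le by force
  have "(\<Sum>k=1..2*n+1. \<omega> k * pp (\<tau> k - u)) = 0"
    by (rule sum.neutral) (auto simp: pp_neg small)
  then have "K4 u = 60 * (b - u) ^ 2" unfolding K4_def by simp
  then show False using assms by simp
qed

lemma windows:
  "(\<forall>i<2*j. z i < z (Suc i)) \<Longrightarrow> (\<forall>i\<le>2*j. K4 (z i) = 0) \<Longrightarrow>
     j \<le> card {k\<in>{1..2*n+1}. z 0 < \<tau> k \<and> \<tau> k < z (2*j)}"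
proof (induction j)
  case 0 then show ?case by simp
next
  case (Suc j)
  have IH: "j \<le> card {k\<in>{1..2*n+1}. z 0 < \<tau> k \<and> \<tau> k < z (2*j)}"
    using Suc.IH Suc.prems by auto
  obtain k0 where k0: "k0 \<in> {1..2*n+1}" "z (2*j) < \<tau> k0" "\<tau> k0 < z (Suc (Suc (2*j)))"
    using K4_window[of "z (2*j)" "z (Suc (2*j))" "z (Suc (Suc (2*j)))"] Suc.prems by auto
  have z0: "z 0 \<le> z (2*j)" using chain_le[of "2 * Suc j" z "2*j"] Suc.prems by auto
  have mono: "\<forall>i<2*Suc j. z i < z (Suc i)" using Suc.prems by auto
  have zz: "z (2*j) \<le> z (2 * Suc j)"
    using Suc.prems(1) by (auto intro!: less_imp_le[OF order.strict_trans[of _ "z (Suc (2*j))"]])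
  let ?A = "{k\<in>{1..2*n+1}. z 0 < \<tau> k \<and> \<tau> k < z (2*j)}"
  let ?B = "{k\<in>{1..2*n+1}. z 0 < \<tau> k \<and> \<tau> k < z (2*Suc j)}"
  have sub: "insert k0 ?A \<subseteq> ?B" using k0 z0 zz by auto
  have "k0 \<notin> ?A" using k0 by auto
  then have "card (insert k0 ?A) = card ?A + 1" by simp
  moreover have "card (insert k0 ?A) \<le> card ?B" by (rule card_mono[OF _ sub]) simp
  ultimately show ?case using IH by simp
qed

lemma three_sets:
  assumes "A1 \<subseteq> {1..2*n+1}" "A2 \<subseteq> {1..2*n+1}" "A3 \<subseteq> {1..2*n+1}"
    "A1 \<inter> A2 = {}" "A1 \<inter> A3 = {}" "A2 \<inter> A3 = {}" "A1 \<noteq> {}" "A3 \<noteq> {}" "2*n \<le> card A2"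
  shows False
proof -
  have f: "finite A1" "finite A2" "finite A3"
    using assms(1-3) by (meson finite_atLeastAtMost finite_subset)+
  have "card (A1 \<union> A2 \<union> A3) = card A1 + card A2 + card A3"
    using f assms(4-6) by (simp add: card_Un_disjoint Int_Un_distrib2)
  moreover have "card (A1 \<union> A2 \<union> A3) \<le> 2*n+1"
    using card_mono[of "{1..2*n+1}" "A1 \<union> A2 \<union> A3"] assms(1-3) by simp
  moreover have "card A1 \<ge> 1" "card A3 \<ge> 1" using f assms(7,8) by (auto simp: Suc_le_eq card_gt_0_iff)
  ultimately show False using assms(9) by simp
qed

lemma contra1:
  assumes "finite S" "S \<subseteq> {a..b}" "a \<in> S" "b \<in> S" "\<forall>x\<in>S. K4 x = 0" "4*n+3 \<le> card S"
  shows False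
proof -
  obtain z where z: "\<forall>i. Suc i < card S \<longrightarrow> z i < z (Suc i)" "\<forall>i<card S. z i \<in> S" "z 0 = a"
     "z (card S - 1) = b"
    using enum_set[OF assms(1-4)] by blast
  have zK: "\<And>i. i < card S \<Longrightarrow> K4 (z i) = 0" using z(2) assms(5) by auto
  obtain k1 where k1: "k1 \<in> {1..2*n+1}" "a \<le> \<tau> k1" "\<tau> k1 < z 1"
    using K4_left[of "z 1"] z(1)[rule_format, of 0] z(3) zK[of 1] assms(6) by auto
  define z' where "z' i = z (Suc i)" for i
  have w: "2*n \<le> card {k\<in>{1..2*n+1}. z' 0 < \<tau> k \<and> \<tau> k < z' (2*(2*n))}"
    by (rule windows) (use z(1) zK assms(6) in \<open>auto simp: z'_def\<close>)
  have lt: "z (4*n+1) < b"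
  proof -
    have "z (4*n+1) < z (Suc (4*n+1))" using z(1) assms(6) by auto
    also have "\<dots> \<le> z (card S - 1)"
      using chain_le2[OF z(1), of "Suc (4*n+1)" "card S - 1"] assms(6) by auto
    finally show ?thesis using z(4) by simp
  qed
  have z14: "z 1 \<le> z (4*n+1)" using chain_le2[OF z(1), of 1 "4*n+1"] assms(6) by auto
  obtain k3 where k3: "k3 \<in> {1..2*n+1}" "z (4*n+1) < \<tau> k3" "\<tau> k3 \<le> b"
    using K4_right[OF lt] zK[of "4*n+1"] assms(6) by auto
  show False
  proof (rule three_sets[of "{k\<in>{1..2*n+1}. a \<le> \<tau> k \<and> \<tau> k < z 1}"
        "{k\<in>{1..2*n+1}. z' 0 < \<tau> k \<and> \<tau> k < z' (2*(2*n))}"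
        "{k\<in>{1..2*n+1}. z (4*n+1) < \<tau> k \<and> \<tau> k \<le> b}"])
    show "2*n \<le> card {k\<in>{1..2*n+1}. z' 0 < \<tau> k \<and> \<tau> k < z' (2*(2*n))}" by (rule w)
  qed (use k1 k3 z'_def z14 in \<open>auto simp: mult.assoc\<close>)
qed

end

context G begin

lemma contra2:
  assumes "finite S" "S \<subseteq> {a..b}" "a \<in> S" "b \<in> S" "\<forall>x\<in>S. K4 x = 0" "4*n+2 \<le> card S"
    and k0: "k0 \<in> {1..2*n+1}" "\<tau> k0 = a"
  shows False
proof -
  obtain z where z: "\<forall>i. Suc i < card S \<longrightarrow> z i < z (Suc i)" "\<forall>i<card S. z i \<in> S" "z 0 = a"
     "z (card S - 1) = b"
    using enum_set[OF assms(1-4)] by blast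
  have zK: "\<And>i. i < card S \<Longrightarrow> K4 (z i) = 0" using z(2) assms(5) by auto
  have w: "2*n \<le> card {k\<in>{1..2*n+1}. z 0 < \<tau> k \<and> \<tau> k < z (2*(2*n))}"
    by (rule windows) (use z(1) zK assms(6) in auto)
  have lt: "z (4*n) < b"
  proof -
    have "z (4*n) < z (Suc (4*n))" using z(1) assms(6) by auto
    also have "\<dots> \<le> z (card S - 1)"
      using chain_le2[OF z(1), of "Suc (4*n)" "card S - 1"] assms(6) by auto
    finally show ?thesis using z(4) by simp
  qed
  have z0: "z 0 \<le> z (4*n)" using chain_le2[OF z(1), of 0 "4*n"] assms(6) by auto
  obtain k3 where k3: "k3 \<in> {1..2*n+1}" "z (4*n) < \<tau> k3" "\<tau> k3 \<le> b"
    using K4_right[OF lt] zK[of "4*n"] assms(6) by auto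
  show False
  proof (rule three_sets[of "{k\<in>{1..2*n+1}. \<tau> k = a}"
        "{k\<in>{1..2*n+1}. z 0 < \<tau> k \<and> \<tau> k < z (2*(2*n))}"
        "{k\<in>{1..2*n+1}. z (4*n) < \<tau> k \<and> \<tau> k \<le> b}"])
    show "2*n \<le> card {k\<in>{1..2*n+1}. z 0 < \<tau> k \<and> \<tau> k < z (2*(2*n))}" by (rule w)
  qed (use k0 k3 z z0 in \<open>auto simp: mult.assoc\<close>)
qed

lemma B0_card_ge: "card B0 = n + 1" by (rule B0_card)

lemma no_node_a: "k \<in> {1..2*n+1} \<Longrightarrow> \<tau> k \<noteq> a"
proof
  assume k: "k \<in> {1..2*n+1}" "\<tau> k = a"
  obtain S4 where S4: "finite S4" "S4 \<subseteq> {a..b}" "a \<in> S4" "b \<in> S4" "\<forall>x\<in>S4. K4 x = 0"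
     "card B0 + 3 * n + 1 \<le> card S4"
    using chain[OF B0_finite order_refl B0_sub B0_zeros(1)] by blast
  show False using contra2[OF S4(1-5) _ k] S4(6) B0_card by simp
qed

lemma not_knot_interval:
  assumes "j \<in> {1..n}" "uknot a b n (j - 1) < s" "s < uknot a b n j"
  shows "s \<in> {a<..<b}" "s \<notin> X"
proof -
  have "a \<le> uknot a b n (j - 1)" using knot_in[of "j - 1"] assms(1) by auto
  moreover have "uknot a b n j \<le> b" using knot_in[of j] assms(1) by auto
  ultimately show "s \<in> {a<..<b}" using assms by auto
  show "s \<notin> X"
  proof
    assume "s \<in> X"
    then obtain i where i: "s = uknot a b n i" unfolding X_def by auto
    have "j - 1 < i" using assms(2) i uknot_mono[OF ab n1, of i "j - 1"] by (meson not_le)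
    moreover have "i < j" using assms(3) i uknot_mono[OF ab n1, of j i] by (meson not_le)
    ultimately show False by simp
  qed
qed

lemma K0_nonzero:
  assumes "s \<in> {a<..<b}" "s \<notin> X"
  shows "K0 s \<noteq> 0"
proof
  assume K: "K0 s = 0"
  have sB: "s \<notin> B0" using assms unfolding B0_def by auto
  have c: "card (insert s B0) = n + 2" using sB B0_finite B0_card by simp
  obtain S4 where S4: "finite S4" "S4 \<subseteq> {a..b}" "a \<in> S4" "b \<in> S4" "\<forall>x\<in>S4. K4 x = 0"
     "card (insert s B0) + 3 * n + 1 \<le> card S4"
  proof -
    have fin: "finite (insert s B0)" using B0_finite by simp
    have sub: "B0 \<subseteq> insert s B0" by auto
    have ssub: "insert s B0 \<subseteq> {a..b}" using B0_sub assms(1) by auto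
    have zer: "\<forall>x\<in>insert s B0. K0 x = 0" using B0_zeros(1) K by auto
    show ?thesis using chain[OF fin sub ssub zer] that by blast
  qed
  show False using contra1[OF S4(1-5)] S4(6) c by simp
qed

lemma K4_knot_nonzero:
  assumes "1 \<le> i" "i \<le> n - 1"
  shows "K4 (uknot a b n i) \<noteq> 0"
proof
  assume K: "K4 (uknot a b n i) = 0"
  obtain S4 where S4: "finite S4" "S4 \<subseteq> {a..b}" "a \<in> S4" "b \<in> S4" "\<forall>x\<in>S4. K4 x = 0"
     "S4 \<inter> X = {}" "card B0 + 3 * n + 1 \<le> card S4"
    using chain[OF B0_finite order_refl B0_sub B0_zeros(1)] by blast
  have xX: "uknot a b n i \<in> X" using assms unfolding X_def by auto
  have xab: "uknot a b n i \<in> {a..b}" using xX X_sub by auto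
  have "uknot a b n i \<notin> S4" using xX S4(6) by auto
  then have "card (insert (uknot a b n i) S4) = card S4 + 1" using S4(1) by simp
  then have c: "4*n+3 \<le> card (insert (uknot a b n i) S4)" using S4(7) B0_card by simp
  have f: "finite (insert (uknot a b n i) S4)" using S4(1) by simp
  have ss: "insert (uknot a b n i) S4 \<subseteq> {a..b}" using S4(2) xab by simp
  have z: "\<forall>x\<in>insert (uknot a b n i) S4. K4 x = 0" using S4(5) K by simp
  show False using contra1[OF f ss _ _ z c] S4(3,4) by simp
qed

lemma K0_ivt:
  assumes j: "j \<in> {1..n}" and p: "uknot a b n (j - 1) < p" "p < uknot a b n j" "K0 p > 0"
    and t: "uknot a b n (j - 1) < t" "t < uknot a b n j"
  shows "K0 t > 0"
proof (rule ccontr)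
  assume "\<not> K0 t > 0"
  then have "K0 t \<le> 0" by simp
  obtain s where s: "min p t \<le> s" "s \<le> max p t" "K0 s = 0"
  proof (cases "p \<le> t")
    case True
    then obtain s where "p \<le> s" "s \<le> t" "K0 s = 0"
      using IVT2'[of K0 t 0 p] \<open>K0 t \<le> 0\<close> p(3) K0_cont by auto
    then show ?thesis using that True by auto
  next
    case False
    then obtain s where "t \<le> s" "s \<le> p" "K0 s = 0"
      using IVT'[of K0 t 0 p] \<open>K0 t \<le> 0\<close> p(3) K0_cont by auto
    then show ?thesis using that False by auto
  qed
  have "uknot a b n (j - 1) < s" "s < uknot a b n j" using s p t by auto
  then have "s \<in> {a<..<b}" "s \<notin> X" using not_knot_interval[OF j] by auto
  then show False using K0_nonzero s(3) by simp
qed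

end

context G begin

definition Kd :: "nat \<Rightarrow> real \<Rightarrow> real" where
  "Kd m = (if m = 0 then K0 else if m = 1 then K1 else if m = 2 then K2 else if m = 3 then K3 else K4)"

lemma Kd_deriv: "m < 4 \<Longrightarrow> DERIV (Kd m) t :> Kd (Suc m) t"
proof -
  assume "m < 4"
  then have "m = 0 \<or> m = 1 \<or> m = 2 \<or> m = 3" by auto
  then show ?thesis
    using K0_deriv K1_deriv K2_deriv K3_deriv unfolding Kd_def by auto
qed

lemma taylor_knot:
  assumes i: "1 \<le> i" "i \<le> n - 1" and y: "y \<noteq> uknot a b n i"
  shows "\<exists>\<xi>. (if y < uknot a b n i then y < \<xi> \<and> \<xi> < uknot a b n i else uknot a b n i < \<xi> \<and> \<xi> < y)
     \<and> K0 y = K4 \<xi> / 24 * (y - uknot a b n i) ^ 4"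
proof -
  let ?c = "uknot a b n i"
  obtain \<xi> where \<xi>: "(if y < ?c then y < \<xi> \<and> \<xi> < ?c else ?c < \<xi> \<and> \<xi> < y)"
    "K0 y = (\<Sum>m<4. (Kd m ?c / fact m) * (y - ?c)^m) + (Kd 4 \<xi> / fact 4) * (y - ?c)^4"
    using Taylor[of 4 Kd K0 "min y ?c" "max y ?c" ?c y] Kd_deriv y
    by (auto simp: Kd_def)
  have "\<And>m. m < 4 \<Longrightarrow> Kd m ?c = 0"
  proof -
    fix m :: nat assume "m < 4"
    then have "m = 0 \<or> m = 1 \<or> m = 2 \<or> m = 3" by auto
    then show "Kd m ?c = 0" using K_knot[OF i] unfolding Kd_def by auto
  qed
  then have "(\<Sum>m<4. (Kd m ?c / fact m) * (y - ?c)^m) = 0" by simp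
  moreover have "Kd 4 \<xi> = K4 \<xi>" by (simp add: Kd_def)
  moreover have "(fact 4 :: real) = 24" by (simp add: fact_numeral)
  ultimately show ?thesis using \<xi> by (intro exI[of _ \<xi>]) simp
qed

lemma sign_near_pos:
  assumes "K4 c > 0" shows "\<exists>d>0. \<forall>x. \<bar>x - c\<bar> < d \<longrightarrow> K4 x > 0"
proof -
  have "isCont K4 c" using K4_cont[of UNIV] by (simp add: continuous_on_eq_continuous_at)
  then have "(K4 \<longlongrightarrow> K4 c) (at c)" by (simp add: isCont_def)
  then have "eventually (\<lambda>x. 0 < K4 x) (at c)" using assms by (rule order_tendstoD(1))
  then obtain d where d: "d > 0" "\<And>x. x \<noteq> c \<Longrightarrow> dist x c < d \<Longrightarrow> 0 < K4 x"
    unfolding eventually_at by auto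
  show ?thesis
  proof (intro exI[of _ d] conjI allI impI)
    fix x assume "\<bar>x - c\<bar> < d"
    then show "K4 x > 0" using d assms by (cases "x = c") (auto simp: dist_real_def)
  qed (use d in auto)
qed

lemma sign_near_neg:
  assumes "K4 c < 0" shows "\<exists>d>0. \<forall>x. \<bar>x - c\<bar> < d \<longrightarrow> K4 x < 0"
proof -
  have "isCont K4 c" using K4_cont[of UNIV] by (simp add: continuous_on_eq_continuous_at)
  then have "(K4 \<longlongrightarrow> K4 c) (at c)" by (simp add: isCont_def)
  then have "eventually (\<lambda>x. K4 x < 0) (at c)" using assms by (rule order_tendstoD(2))
  then obtain d where d: "d > 0" "\<And>x. x \<noteq> c \<Longrightarrow> dist x c < d \<Longrightarrow> K4 x < 0"
    unfolding eventually_at by auto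
  show ?thesis
  proof (intro exI[of _ d] conjI allI impI)
    fix x assume "\<bar>x - c\<bar> < d"
    then show "K4 x < 0" using d assms by (cases "x = c") (auto simp: dist_real_def)
  qed (use d in auto)
qed

lemma first_pos: "\<exists>p. uknot a b n 0 < p \<and> p < uknot a b n 1 \<and> K0 p > 0"
proof -
  define \<mu> where "\<mu> = Min (\<tau> ` {1..2*n+1})"
  have ne: "\<tau> ` {1..2*n+1} \<noteq> {}" by auto
  have all: "\<forall>x\<in>\<tau> ` {1..2*n+1}. a < x"
  proof
    fix x assume "x \<in> \<tau> ` {1..2*n+1}"
    then obtain k where k: "k \<in> {1..2*n+1}" "x = \<tau> k" by blast
    have "a \<le> \<tau> k" "\<tau> k \<noteq> a" using tau_ge[OF k(1)] no_node_a[OF k(1)] by auto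
    then show "a < x" using k(2) by simp
  qed
  have mu_gt: "a < \<mu>" unfolding \<mu>_def using Min_gr_iff[of "\<tau> ` {1..2*n+1}" a] ne all by simp
  have mu_le: "\<And>k. k \<in> {1..2*n+1} \<Longrightarrow> \<mu> \<le> \<tau> k" unfolding \<mu>_def by simp
  have x1: "a < uknot a b n 1" using uknot_strict[OF ab n1, of 0 1] by simp
  define p where "p = a + min (\<mu> - a) (uknot a b n 1 - a) / 2"
  define mm where "mm = min (\<mu> - a) (uknot a b n 1 - a)"
  have mm: "0 < mm" "mm \<le> \<mu> - a" "mm \<le> uknot a b n 1 - a" using mu_gt x1 unfolding mm_def by auto
  have pe: "p = a + mm / 2" unfolding p_def mm_def by simp
  have p: "a < p" "p < uknot a b n 1" "p \<le> \<mu>" using mm unfolding pe by linarith+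
  have "K0 p = (p - a) ^ 6 / 6"
  proof (rule K0_small)
    show "a \<le> p" using p by simp
    fix k assume "k \<in> {1..2*n+1}"
    then show "p \<le> \<tau> k" using p(3) mu_le[of k] by simp
  qed
  moreover have "(p - a) ^ 6 > 0" using p by simp
  ultimately have "K0 p > 0" by linarith
  then show ?thesis using p by auto
qed

lemma K0_pos_int:
  "1 \<le> j \<Longrightarrow> j \<le> n \<Longrightarrow> uknot a b n (j - 1) < t \<Longrightarrow> t < uknot a b n j \<Longrightarrow> K0 t > 0"
proof (induction j arbitrary: t)
  case 0 then show ?case by simp
next
  case (Suc j)
  show ?case
  proof (cases "j = 0")
    case True
    obtain p where p: "uknot a b n 0 < p" "p < uknot a b n 1" "K0 p > 0" using first_pos by blast
    show ?thesis using K0_ivt[of 1 p t] p Suc.prems True n1 by auto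
  next
    case False
    let ?c = "uknot a b n j"
    have j: "1 \<le> j" "j \<le> n - 1" using False Suc.prems by auto
    have IH: "\<And>t. uknot a b n (j - 1) < t \<Longrightarrow> t < ?c \<Longrightarrow> K0 t > 0"
      using Suc.IH j Suc.prems by auto
    have h: "uknot a b n (j - 1) < ?c" using uknot_strict[OF ab n1, of "j - 1" j] j by simp
    have h': "?c < uknot a b n (Suc j)" using uknot_strict[OF ab n1, of j "Suc j"] by simp
    have K4c: "K4 ?c > 0"
    proof (rule ccontr)
      assume "\<not> K4 ?c > 0"
      then have "K4 ?c < 0" using K4_knot_nonzero[OF j] by simp
      then obtain d where d: "d > 0" "\<And>x. \<bar>x - ?c\<bar> < d \<Longrightarrow> K4 x < 0" using sign_near_neg by blast
      define e where "e = min d (?c - uknot a b n (j - 1)) / 2"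
      have e: "0 < e" "e < d" "e < ?c - uknot a b n (j - 1)" using d h by (auto simp: e_def)
      define y where "y = ?c - e"
      have y: "y < ?c" "uknot a b n (j - 1) < y" using e by (auto simp: y_def)
      obtain \<xi> where \<xi>: "y < \<xi>" "\<xi> < ?c" "K0 y = K4 \<xi> / 24 * (y - ?c) ^ 4"
        using taylor_knot[OF j, of y] y by auto
      have "K4 \<xi> < 0" using d(2)[of \<xi>] \<xi> e y_def by auto
      moreover have "(y - ?c) ^ 4 > 0" using y by simp
      ultimately have "K4 \<xi> * (y - ?c) ^ 4 < 0" by (rule mult_neg_pos)
      moreover have "K0 y = (K4 \<xi> * (y - ?c) ^ 4) / 24" using \<xi>(3) by simp
      ultimately have "K0 y < 0" by linarith
      moreover have "K0 y > 0" using IH y by simp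
      ultimately show False by simp
    qed
    then obtain d where d: "d > 0" "\<And>x. \<bar>x - ?c\<bar> < d \<Longrightarrow> K4 x > 0" using sign_near_pos by blast
    define e where "e = min d (uknot a b n (Suc j) - ?c) / 2"
    have e: "0 < e" "e < d" "e < uknot a b n (Suc j) - ?c" using d h' by (auto simp: e_def)
    define y where "y = ?c + e"
    have y: "?c < y" "y < uknot a b n (Suc j)" using e by (auto simp: y_def)
    obtain \<xi> where \<xi>: "?c < \<xi>" "\<xi> < y" "K0 y = K4 \<xi> / 24 * (y - ?c) ^ 4"
      using taylor_knot[OF j, of y] y by auto
    have "K4 \<xi> > 0" using d(2)[of \<xi>] \<xi> e y_def by auto
    moreover have "(y - ?c) ^ 4 > 0" using y by simp
    ultimately have "K4 \<xi> * (y - ?c) ^ 4 > 0" by (rule mult_pos_pos)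
    moreover have "K0 y = (K4 \<xi> * (y - ?c) ^ 4) / 24" using \<xi>(3) by simp
    ultimately have "K0 y > 0" by linarith
    then show ?thesis using K0_ivt[of "Suc j" y t] y Suc.prems by auto
  qed
qed

lemma K0_nonneg: "t \<in> {a..b} \<Longrightarrow> K0 t \<ge> 0"
proof -
  assume t: "t \<in> {a..b}"
  show ?thesis
  proof (cases "t \<in> B0")
    case True
    then show ?thesis using B0_zeros(1) by auto
  next
    case False
    then have tab: "a < t" "t < b" "t \<notin> X" using t unfolding B0_def by auto
    define r where "r = (t - a) * real n / (b - a)"
    have r: "0 < r" "r < real n" using tab ab n1 by (auto simp: r_def field_simps)
    define j where "j = nat \<lceil>r\<rceil>"
    have cj: "real_of_int \<lceil>r\<rceil> - 1 < r" "r \<le> real_of_int \<lceil>r\<rceil>" by linarith+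
    have cpos: "0 < \<lceil>r\<rceil>" using r by simp
    have "1 \<le> \<lceil>r\<rceil>" using cpos by simp
    then have "nat 1 \<le> nat \<lceil>r\<rceil>" by (rule nat_mono)
    then have j1: "1 \<le> j" by (simp add: j_def)
    have jr: "real j = real_of_int \<lceil>r\<rceil>" using cpos by (simp add: j_def)
    have jn: "j \<le> n" using r cj jr by (simp add: j_def ceiling_le_iff)
    have le: "t \<le> uknot a b n j"
    proof -
      have "t = a + r * (b - a) / real n" using ab n1 by (simp add: r_def field_simps)
      also have "\<dots> \<le> a + real j * (b - a) / real n" using cj jr ab n1
        by (intro add_left_mono divide_right_mono mult_right_mono) auto
      finally show ?thesis by (simp add: uknot_def)
    qed
    have ne: "t \<noteq> uknot a b n j"
    proof
      assume e: "t = uknot a b n j"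
      show False
      proof (cases "j = n")
        case True then show False using e tab uknot_n[OF n1] by simp
      next
        case False then have "uknot a b n j \<in> X" using j1 jn unfolding X_def by auto
        then show False using e tab by simp
      qed
    qed
    have lt: "uknot a b n (j - 1) < t"
    proof -
      have "real (j - 1) = real j - 1" using j1 by simp
      then have "uknot a b n (j - 1) = a + (real j - 1) * (b - a) / real n" by (simp add: uknot_def)
      also have "\<dots> < a + r * (b - a) / real n" using cj jr ab n1
        by (intro add_strict_left_mono divide_strict_right_mono mult_strict_right_mono) auto
      also have "\<dots> = t" using ab n1 by (simp add: r_def field_simps)
      finally show ?thesis .
    qed
    show ?thesis using K0_pos_int[OF j1 jn lt] le ne by simp
  qed
qed

lemma intK0_pos: "integral {a..b} K0 > 0"
proof -
  have cont: "continuous_on {a..b} K0" by (rule K0_cont)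
  have ge: "integral {a..b} K0 \<ge> 0"
    using K0_nonneg by (intro integral_nonneg integrable_continuous_real cont) auto
  define p where "p = (a + uknot a b n 1) / 2"
  have x1: "a < uknot a b n 1" using uknot_strict[OF ab n1, of 0 1] by simp
  have x1b: "uknot a b n 1 \<le> b" using knot_in[of 1] n1 by simp
  have pK: "K0 p > 0" using K0_pos_int[of 1 p] n1 x1 by (simp add: p_def)
  have pin: "p \<in> {a..b}" using x1 x1b by (simp add: p_def)
  have "integral {a..b} K0 \<noteq> 0"
  proof
    assume "integral {a..b} K0 = 0"
    then have "\<forall>x\<in>{a..b}. K0 x = 0" using integral_eq_0_iff[OF cont ab K0_nonneg] by simp
    then show False using pin pK by simp
  qed
  then show ?thesis using ge by simp
qed

end

context G begin

lemma Eq_diff: "f integrable_on {a..b} \<Longrightarrow> g integrable_on {a..b} \<Longrightarrow> Eq (\<lambda>x. f x - g x) = Eq f - Eq g"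
  unfolding Eq_def by (simp add: integral_diff sum_subtractf algebra_simps del: sum.cl_ivl_Suc)

lemma Eq_cmult: "Eq (\<lambda>x. c * g x) = c * Eq g"
  unfolding Eq_def
  by (simp add: Henstock_Kurzweil_Integration.integral_mult_right sum_distrib_left algebra_simps
      del: sum.cl_ivl_Suc)

lemma Eq_sum: "finite A \<Longrightarrow> (\<And>i. i \<in> A \<Longrightarrow> g i integrable_on {a..b}) \<Longrightarrow>
   Eq (\<lambda>x. \<Sum>i\<in>A. g i x) = (\<Sum>i\<in>A. Eq (g i))"
proof -
  assume fin: "finite A" and int: "\<And>i. i \<in> A \<Longrightarrow> g i integrable_on {a..b}"
  have "integral {a..b} (\<lambda>x. \<Sum>i\<in>A. g i x) = (\<Sum>i\<in>A. integral {a..b} (g i))"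
    by (rule integral_sum[OF fin int])
  moreover have "(\<Sum>k=1..2*n+1. \<omega> k * (\<Sum>i\<in>A. g i (\<tau> k))) = (\<Sum>i\<in>A. \<Sum>k=1..2*n+1. \<omega> k * g i (\<tau> k))"
    by (simp only: sum_distrib_left) (rule sum.swap)
  ultimately show ?thesis unfolding Eq_def by (simp only: sum_subtractf)
qed

lemma Eq_Tay: "Eq (\<lambda>x. \<Sum>i<6. ((x - a) ^ i / fact i) * Dv i) = 0"
proof -
  have "Eq (\<lambda>x. \<Sum>i<6. ((x - a) ^ i / fact i) * Dv i) = (\<Sum>i<6. Eq (\<lambda>x. ((x - a) ^ i / fact i) * Dv i))"
    by (rule Eq_sum) (auto intro!: integrable_continuous_real continuous_intros)
  also have "\<dots> = 0"
  proof (rule sum.neutral, rule ballI)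
    fix i assume i: "i \<in> {..<(6::nat)}"
    have "Eq (\<lambda>x. ((x - a) ^ i / fact i) * Dv i) = Eq (\<lambda>x. (Dv i / fact i) * (x - a) ^ i)"
      by (rule Eq_cong) simp
    also have "\<dots> = (Dv i / fact i) * Eq (\<lambda>x. (x - a) ^ i)" by (rule Eq_cmult)
    also have "\<dots> = 0" using i Eq_pow[of i a] by simp
    finally show "Eq (\<lambda>x. ((x - a) ^ i / fact i) * Dv i) = 0" .
  qed
  finally show ?thesis .
qed

lemma peano:
  assumes C: "Cm_derivs 6 a b f D"
  shows "Eq f = integral {a..b} (\<lambda>t. K0 t * D 6 t) / 120"
proof -
  have D0: "D 0 = f"
    and Dd: "\<And>j x. j < 6 \<Longrightarrow> x \<in> {a..b} \<Longrightarrow> (D j has_real_derivative D (Suc j) x) (at x within {a..b})"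
    and D6c: "continuous_on {a..b} (D 6)"
    using C unfolding Cm_derivs_def by auto
  define h where "h x t = pp (x - t) ^ 5 * D 6 t" for x t
  define Tay where "Tay x = (\<Sum>i<6. ((x - a) ^ i / fact i) * D i a)" for x
  define R where "R x = integral {a..b} (h x) / 120" for x
  have hcont: "\<And>x. continuous_on {a..b} (h x)" unfolding h_def by (intro continuous_intros D6c)
  have taylor: "f x = Tay x + R x" if x: "x \<in> {a..b}" for x
  proof -
    have sub: "{a..x} \<subseteq> {a..b}" using x by auto
    have dv: "\<And>m t. m < 6 \<Longrightarrow> a \<le> t \<Longrightarrow> t \<le> x \<Longrightarrow>
        (D m has_vector_derivative D (Suc m) t) (at t within {a..x})"
    proof -
      fix m t assume m: "m < (6::nat)" and t: "a \<le> t" "t \<le> x"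
      have "(D m has_real_derivative D (Suc m) t) (at t within {a..x})"
        using DERIV_subset[OF Dd[OF m] sub] t x by auto
      then show "(D m has_vector_derivative D (Suc m) t) (at t within {a..x})"
        by (simp add: has_real_derivative_iff_has_vector_derivative)
    qed
    have T: "f x = (\<Sum>i<6. ((x - a) ^ i / fact i) *\<^sub>R D i a) +
        integral {a..x} (\<lambda>t. ((x - t) ^ (6 - 1) / fact (6 - 1)) *\<^sub>R D 6 t)"
      using Taylor_integral[of 6 D f a x] D0 dv x by auto
    have i1: "integral {a..x} (\<lambda>t. ((x - t) ^ (6 - 1) / fact (6 - 1)) *\<^sub>R D 6 t) = integral {a..x} (h x) / 120"
    proof -
      have "integral {a..x} (\<lambda>t. ((x - t) ^ (6 - 1) / fact (6 - 1)) *\<^sub>R D 6 t) = integral {a..x} (\<lambda>t. h x t / 120)"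
        by (rule integral_cong) (simp add: h_def pp_pos fact_numeral)
      then show ?thesis by simp
    qed
    have i2: "integral {a..x} (h x) + integral {x..b} (h x) = integral {a..b} (h x)"
      by (rule Henstock_Kurzweil_Integration.integral_combine) (use x integrable_continuous_real[OF hcont] in auto)
    have i3: "integral {x..b} (h x) = 0"
    proof -
      have "integral {x..b} (h x) = integral {x..b} (\<lambda>t. 0)"
        by (rule integral_cong) (simp add: h_def pp_neg)
      then show ?thesis by simp
    qed
    show ?thesis using T i1 i2 i3 unfolding Tay_def R_def by simp
  qed
  have fcont: "continuous_on {a..b} f"
    using DERIV_continuous_on[of "{a..b}" "D 0" "D 1"] Dd[of 0] D0 by auto
  have Tint: "Tay integrable_on {a..b}" unfolding Tay_def
    by (auto intro!: integrable_continuous_real continuous_intros)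
  have fint: "f integrable_on {a..b}" by (rule integrable_continuous_real[OF fcont])
  have ER: "Eq f = Eq R"
  proof -
    have "Eq R = Eq (\<lambda>x. f x - Tay x)" by (rule Eq_cong) (simp add: taylor)
    also have "\<dots> = Eq f - Eq Tay" by (rule Eq_diff[OF fint Tint])
    also have "Eq Tay = 0" unfolding Tay_def by (rule Eq_Tay)
    finally show ?thesis by simp
  qed
  have swapc: "continuous_on (cbox (a, a) (b, b)) (\<lambda>(x, t). h x t)"
  proof -
    have "continuous_on (cbox (a, a) (b, b)) (\<lambda>p. D 6 (snd p))"
      by (rule continuous_on_compose2[OF D6c continuous_on_snd]) (auto simp: cbox_Pair_eq)
    then have "continuous_on (cbox (a, a) (b, b)) (\<lambda>p. pp (fst p - snd p) ^ 5 * D 6 (snd p))"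
      by (intro continuous_intros)
    then show ?thesis unfolding h_def by (simp add: case_prod_beta')
  qed
  have inner: "integral {a..b} (\<lambda>x. h x t) = (b - t) ^ 6 / 6 * D 6 t" if t: "t \<in> {a..b}" for t
  proof -
    have "integral {a..b} (\<lambda>x. h x t) = integral {a..b} (\<lambda>x. pp (x - t) ^ 5) * D 6 t"
      unfolding h_def by (rule Henstock_Kurzweil_Integration.integral_mult_left)
    also have "\<dots> = (b - t) ^ 6 / 6 * D 6 t" using int_pp[of a t b 5] t by simp
    finally show ?thesis .
  qed
  have intR: "integral {a..b} R = integral {a..b} (\<lambda>t. (b - t) ^ 6 / 6 * D 6 t) / 120"
  proof -
    have "integral {a..b} R = integral {a..b} (\<lambda>x. integral {a..b} (h x)) / 120"
      unfolding R_def by simp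
    also have "integral {a..b} (\<lambda>x. integral {a..b} (h x)) = integral {a..b} (\<lambda>t. integral {a..b} (\<lambda>x. h x t))"
      using integral_swap_continuous[OF swapc] by (simp add: cbox_interval)
    also have "\<dots> = integral {a..b} (\<lambda>t. (b - t) ^ 6 / 6 * D 6 t)"
      by (rule integral_cong) (rule inner)
    finally show ?thesis .
  qed
  have sumR: "(\<Sum>k=1..2*n+1. \<omega> k * R (\<tau> k)) =
      integral {a..b} (\<lambda>t. (\<Sum>k=1..2*n+1. \<omega> k * pp (\<tau> k - t) ^ 5) * D 6 t) / 120"
  proof -
    have "integral {a..b} (\<lambda>t. (\<Sum>k=1..2*n+1. \<omega> k * pp (\<tau> k - t) ^ 5) * D 6 t)
        = integral {a..b} (\<lambda>t. \<Sum>k=1..2*n+1. \<omega> k * h (\<tau> k) t)"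
      by (rule integral_cong) (simp add: h_def sum_distrib_right mult.assoc del: sum.cl_ivl_Suc)
    also have "\<dots> = (\<Sum>k=1..2*n+1. integral {a..b} (\<lambda>t. \<omega> k * h (\<tau> k) t))"
      by (rule integral_sum) (auto intro!: integrable_continuous_real continuous_intros hcont)
    also have "\<dots> = (\<Sum>k=1..2*n+1. \<omega> k * integral {a..b} (h (\<tau> k)))"
      by (simp add: Henstock_Kurzweil_Integration.integral_mult_right del: sum.cl_ivl_Suc)
    finally show ?thesis unfolding R_def
      by (simp add: sum_divide_distrib del: sum.cl_ivl_Suc)
  qed
  have i6: "(\<lambda>t. (b - t) ^ 6 / 6 * D 6 t) integrable_on {a..b}"
    by (auto intro!: integrable_continuous_real continuous_intros D6c)
  have iS: "(\<lambda>t. (\<Sum>k=1..2*n+1. \<omega> k * pp (\<tau> k - t) ^ 5) * D 6 t) integrable_on {a..b}"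
    by (auto intro!: integrable_continuous_real continuous_intros D6c)
  have "Eq R = (integral {a..b} (\<lambda>t. (b - t) ^ 6 / 6 * D 6 t)
      - integral {a..b} (\<lambda>t. (\<Sum>k=1..2*n+1. \<omega> k * pp (\<tau> k - t) ^ 5) * D 6 t)) / 120"
    unfolding Eq_def intR sumR by (simp add: diff_divide_distrib)
  also have "\<dots> = integral {a..b} (\<lambda>t. (b - t) ^ 6 / 6 * D 6 t - (\<Sum>k=1..2*n+1. \<omega> k * pp (\<tau> k - t) ^ 5) * D 6 t) / 120"
    by (subst integral_diff[OF i6 iS]) (rule refl)
  also have "\<dots> = integral {a..b} (\<lambda>t. K0 t * D 6 t) / 120"
    by (simp add: K0_def algebra_simps del: sum.cl_ivl_Suc)
  finally show ?thesis using ER by simp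
qed

end


lemma d_powfact: "m \<ge> 1 \<Longrightarrow> ((\<lambda>x. (x - a) ^ m / fact m) has_real_derivative (x - a) ^ (m - 1) / fact (m - 1)) (at x within S)"
proof -
  assume m: "m \<ge> 1"
  have d: "((\<lambda>x. x - a) has_real_derivative 1) (at x within S)" by (auto intro!: derivative_eq_intros)
  have "((\<lambda>x. (x - a) ^ m / fact m) has_real_derivative real m * (x - a) ^ (m - Suc 0) * 1 / fact m) (at x within S)"
    by (intro DERIV_cdivide DERIV_chain2[OF DERIV_pow d])
  moreover have "real m * (x - a) ^ (m - Suc 0) * 1 / fact m = (x - a) ^ (m - 1) / fact (m - 1)"
  proof -
    have "(fact m :: real) = real m * fact (m - 1)" by (rule fact_reduce) (use m in simp)
    then show ?thesis using m by (simp add: field_simps)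
  qed
  ultimately show ?thesis by simp
qed

context G begin

lemma const_eq: "(b - a) ^ 7 / 5040 - (1/720) * (\<Sum>k=1..2*n+1. \<omega> k * (\<tau> k - a) ^ 6) = integral {a..b} K0 / 120"
proof -
  define D where "D j x = (x - a) ^ (6 - j) / fact (6 - j)" for j x
  have C: "Cm_derivs 6 a b (\<lambda>x. (x - a) ^ 6 / 720) D"
    unfolding Cm_derivs_def
  proof (intro conjI allI impI ballI)
    show "D 0 = (\<lambda>x. (x - a) ^ 6 / 720)" by (simp add: D_def fun_eq_iff fact_numeral)
    fix j :: nat and x assume j: "j < 6"
    have "Suc j \<le> 6" using j by simp
    then have e: "6 - Suc j = (6 - j) - 1" by simp
    show "(D j has_real_derivative D (Suc j) x) (at x within {a..b})"
      unfolding D_def e using j by (intro d_powfact) simp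
  next
    show "continuous_on {a..b} (D 6)" unfolding D_def by (intro continuous_intros) simp
  qed
  have "Eq (\<lambda>x. (x - a) ^ 6 / 720) = integral {a..b} (\<lambda>t. K0 t * D 6 t) / 120" by (rule peano[OF C])
  also have "\<dots> = integral {a..b} K0 / 120" by (simp add: D_def)
  finally have e1: "Eq (\<lambda>x. (x - a) ^ 6 / 720) = integral {a..b} K0 / 120" .
  have I: "integral {a..b} (\<lambda>x. (x - a) ^ 6 / 720) = (b - a) ^ 7 / 5040"
  proof -
    have "integral {a..b} (\<lambda>x. (x - a) ^ 6 / 720) = integral {a..b} (\<lambda>x. (x - a) ^ 6) / 720"
      by (rule Henstock_Kurzweil_Integration.integral_divide)
    also have "\<dots> = (b - a) ^ 7 / 5040" using int_pow[of a b a 6] ab by simp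
    finally show ?thesis .
  qed
  have S: "(\<Sum>k=1..2*n+1. \<omega> k * ((\<tau> k - a) ^ 6 / 720)) = (1/720) * (\<Sum>k=1..2*n+1. \<omega> k * (\<tau> k - a) ^ 6)"
    by (simp only: sum_distrib_left) (rule sum.cong, simp_all)
  have "Eq (\<lambda>x. (x - a) ^ 6 / 720) = (b - a) ^ 7 / 5040 - (1/720) * (\<Sum>k=1..2*n+1. \<omega> k * (\<tau> k - a) ^ 6)"
    unfolding Eq_def I S ..
  then show ?thesis using e1 by simp
qed

lemma mean_value:
  assumes C: "Cm_derivs 6 a b f D"
  shows "\<exists>\<xi>\<in>{a..b}. Eq f = integral {a..b} K0 / 120 * D 6 \<xi>"
proof -
  have D6c: "continuous_on {a..b} (D 6)" using C unfolding Cm_derivs_def by auto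
  have cpos: "integral {a..b} K0 > 0" by (rule intK0_pos)
  obtain xm where xm: "xm \<in> {a..b}" "\<And>y. y \<in> {a..b} \<Longrightarrow> D 6 xm \<le> D 6 y"
    using continuous_attains_inf[OF compact_Icc _ D6c] ab by auto
  obtain xM where xM: "xM \<in> {a..b}" "\<And>y. y \<in> {a..b} \<Longrightarrow> D 6 y \<le> D 6 xM"
    using continuous_attains_sup[OF compact_Icc _ D6c] ab by auto
  have K0i: "K0 integrable_on {a..b}" by (rule integrable_continuous_real[OF K0_cont])
  have KDi: "(\<lambda>t. K0 t * D 6 t) integrable_on {a..b}"
    by (rule integrable_continuous_real) (intro continuous_intros K0_cont D6c)
  have lo: "integral {a..b} K0 * D 6 xm \<le> integral {a..b} (\<lambda>t. K0 t * D 6 t)"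
  proof -
    have i1: "(\<lambda>t. K0 t * D 6 xm) integrable_on {a..b}"
      by (rule integrable_continuous_real) (intro continuous_intros K0_cont)
    have "integral {a..b} (\<lambda>t. K0 t * D 6 xm) \<le> integral {a..b} (\<lambda>t. K0 t * D 6 t)"
    proof (rule integral_le[OF i1 KDi])
      fix t assume t: "t \<in> {a..b}"
      show "K0 t * D 6 xm \<le> K0 t * D 6 t" by (rule mult_left_mono[OF xm(2)[OF t] K0_nonneg[OF t]])
    qed
    then show ?thesis by (simp add: Henstock_Kurzweil_Integration.integral_mult_left)
  qed
  have hi: "integral {a..b} (\<lambda>t. K0 t * D 6 t) \<le> integral {a..b} K0 * D 6 xM"
  proof -
    have i1: "(\<lambda>t. K0 t * D 6 xM) integrable_on {a..b}"
      by (rule integrable_continuous_real) (intro continuous_intros K0_cont)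
    have "integral {a..b} (\<lambda>t. K0 t * D 6 t) \<le> integral {a..b} (\<lambda>t. K0 t * D 6 xM)"
    proof (rule integral_le[OF KDi i1])
      fix t assume t: "t \<in> {a..b}"
      show "K0 t * D 6 t \<le> K0 t * D 6 xM" by (rule mult_left_mono[OF xM(2)[OF t] K0_nonneg[OF t]])
    qed
    then show ?thesis by (simp add: Henstock_Kurzweil_Integration.integral_mult_left)
  qed
  define v where "v = integral {a..b} (\<lambda>t. K0 t * D 6 t) / integral {a..b} K0"
  have v: "D 6 xm \<le> v" "v \<le> D 6 xM" using lo hi cpos by (auto simp: v_def field_simps)
  have cont': "continuous_on {min xm xM..max xm xM} (D 6)"
    by (rule continuous_on_subset[OF D6c]) (use xm xM in auto)
  obtain \<xi> where \<xi>: "min xm xM \<le> \<xi>" "\<xi> \<le> max xm xM" "D 6 \<xi> = v"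
  proof (cases "xm \<le> xM")
    case True
    then obtain \<xi> where "xm \<le> \<xi>" "\<xi> \<le> xM" "D 6 \<xi> = v"
      using IVT'[of "D 6" xm v xM] v cont' by auto
    then show ?thesis using that True by auto
  next
    case False
    then obtain \<xi> where "xM \<le> \<xi>" "\<xi> \<le> xm" "D 6 \<xi> = v"
      using IVT2'[of "D 6" xm v xM] v cont' by auto
    then show ?thesis using that False by auto
  qed
  have \<xi>ab: "\<xi> \<in> {a..b}" using \<xi> xm xM by auto
  have "Eq f = integral {a..b} (\<lambda>t. K0 t * D 6 t) / 120" by (rule peano[OF C])
  also have "\<dots> = integral {a..b} K0 / 120 * v" using cpos by (simp add: v_def)
  finally show ?thesis using \<xi>ab \<xi>(3) by auto
qed

end

theorem theorem2:
  fixes a b :: real and n :: nat and \<tau> \<omega> :: "nat \<Rightarrow> real"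
  assumes "a < b" and "n \<ge> 1"
    and "gaussian_rule51 a b n \<tau> \<omega>"
  shows "(\<forall>f D. Cm_derivs 6 a b f D \<longrightarrow>
            (\<exists>\<xi>\<in>{a..b}. integral {a..b} f - (\<Sum>k=1..2*n+1. \<omega> k * f (\<tau> k))
               = ((b - a) ^ 7 / 5040 - (1/720) * (\<Sum>k=1..2*n+1. \<omega> k * (\<tau> k - a) ^ 6)) * D 6 \<xi>))
         \<and> (b - a) ^ 7 / 5040 - (1/720) * (\<Sum>k=1..2*n+1. \<omega> k * (\<tau> k - a) ^ 6) > 0"
proof -
  interpret G a b n \<tau> \<omega> using assms by unfold_locales
  show ?thesis
  proof (intro conjI allI impI)
    fix f D assume C: "Cm_derivs 6 a b f D"
    show "\<exists>\<xi>\<in>{a..b}. integral {a..b} f - (\<Sum>k=1..2*n+1. \<omega> k * f (\<tau> k))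
               = ((b - a) ^ 7 / 5040 - (1/720) * (\<Sum>k=1..2*n+1. \<omega> k * (\<tau> k - a) ^ 6)) * D 6 \<xi>"
      using mean_value[OF C] unfolding const_eq Eq_def .
  next
    show "(b - a) ^ 7 / 5040 - (1/720) * (\<Sum>k=1..2*n+1. \<omega> k * (\<tau> k - a) ^ 6) > 0"
      unfolding const_eq using intK0_pos by simp
  qed
qed


end
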